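(* For every integer $n\ge 2$, the configuration $\mathit{DCD}(n)$ is isomorphic (as a combinatorial incidence structure) to the combinatorial configuration $N(O_n)$ obtained by the $V$-construction from the Odd graph $O_n$.
   Context: $\mathit{DCD}(n)$ (Desargues–Cayley–Danzer configuration): take $2n-1$ hyperplanes in general position (no more than $n$ of them through a common point) in $n$-dimensional projective space. Each $n$ of them meet in a point and each $n-1$ of them meet in a line; the points and lines are thus labelled by the $n$-element and the $(n-1)$-element subsets of a $(2n-1)$-element set, and a point is incident with a line iff the label of the line is contained in the label of the point. As a combinatorial incidence structure, $\mathit{DCD}(n)$ has as points the $n$-subsets and as lines the $(n-1)$-subsets of $\{1,\dots,2n-1\}$, with incidence given by containment. The Odd graph $O_n$ is the Kneser graph $K(2n-1,n-1)$: its vertices are the $(n-1)$-subsets of a $(2n-1)$-element set, two being adjacent iff they are disjoint. $V$-construction: for a regular graph $G$, let $N(v)$ denote the set of neighbours of a vertex $v$. $G$ is admissible if no two distinct vertices have the same neighbourhood. For admissible $G$, $N(G)$ is the incidence structure whose points are the vertices of $G$, whose blocks are the sets $N(v)$, $v\in V(G)$, and with incidence given by membership. Two incidence structures are isomorphic if there are bijections between their point sets and between their block sets preserving incidence. *)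

theory Defs
  imports Main
begin

type_synonym ('p, 'b) incidence_structure = "'p set \<times> 'b set \<times> ('p \<Rightarrow> 'b \<Rightarrow> bool)"

definition inc_points :: "('p, 'b) incidence_structure \<Rightarrow> 'p set" where
  "inc_points S = fst S"
definition inc_blocks :: "('p, 'b) incidence_structure \<Rightarrow> 'b set" where
  "inc_blocks S = fst (snd S)"
definition inc_rel :: "('p, 'b) incidence_structure \<Rightarrow> 'p \<Rightarrow> 'b \<Rightarrow> bool" where
  "inc_rel S = snd (snd S)"

definition inc_iso ::
  "('p, 'b) incidence_structure \<Rightarrow> ('q, 'c) incidence_structure \<Rightarrow> bool" where
  "inc_iso S T \<longleftrightarrow> (\<exists>f g. bij_betw f (inc_points S) (inc_points T)
      \<and> bij_betw g (inc_blocks S) (inc_blocks T)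
      \<and> (\<forall>p\<in>inc_points S. \<forall>b\<in>inc_blocks S. inc_rel S p b \<longleftrightarrow> inc_rel T (f p) (g b)))"

definition DCD :: "nat \<Rightarrow> (nat set, nat set) incidence_structure" where
  "DCD n = ({P. P \<subseteq> {1..2*n-1} \<and> card P = n},
            {L. L \<subseteq> {1..2*n-1} \<and> card L = n - 1},
            (\<lambda>P L. L \<subseteq> P))"

type_synonym 'a graph = "'a set \<times> ('a \<Rightarrow> 'a \<Rightarrow> bool)"

definition gverts :: "'a graph \<Rightarrow> 'a set" where "gverts G = fst G"
definition gadj :: "'a graph \<Rightarrow> 'a \<Rightarrow> 'a \<Rightarrow> bool" where "gadj G = snd G"

definition nbhd :: "'a graph \<Rightarrow> 'a \<Rightarrow> 'a set" where
  "nbhd G v = {u \<in> gverts G. gadj G v u}"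

definition admissible :: "'a graph \<Rightarrow> bool" where
  "admissible G \<longleftrightarrow> inj_on (nbhd G) (gverts G)"

definition V_construction :: "'a graph \<Rightarrow> ('a, 'a set) incidence_structure" where
  "V_construction G = (gverts G, nbhd G ` gverts G, (\<lambda>p b. p \<in> b))"

definition odd_graph :: "nat \<Rightarrow> nat set graph" where
  "odd_graph n = ({A. A \<subseteq> {1..2*n-1} \<and> card A = n - 1},
                  (\<lambda>A B. A \<inter> B = {}))"

end

theory Submission
  imports Defs
begin

lemma nbhd_inj:
  fixes n :: nat
  assumes n: "n \<ge> 2"
  shows "inj_on (nbhd (odd_graph n)) {A. A \<subseteq> {1..2*n-1} \<and> card A = n - 1}"
proof (rule inj_onI, rule ccontr)
  let ?U = "{1..2*n-1::nat}"
  fix A B assume A: "A \<in> {A. A \<subseteq> ?U \<and> card A = n - 1}" and B: "B \<in> {A. A \<subseteq> ?U \<and> card A = n - 1}"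
    and eq: "nbhd (odd_graph n) A = nbhd (odd_graph n) B" and ne: "A \<noteq> B"
  have fA: "finite A" "finite B" using A B finite_subset by auto
  have "\<not> A \<subseteq> B"
  proof
    assume "A \<subseteq> B"
    then have "A = B" using A B fA card_subset_eq[of B A] by simp
    then show False using ne by simp
  qed
  then obtain x where x: "x \<in> A" "x \<notin> B" by auto
  have cUB: "card (?U - B) = n"
  proof -
    have "B \<subseteq> ?U" "card B = n - 1" using B by auto
    moreover have "finite B" using \<open>B \<subseteq> ?U\<close> finite_subset by blast
    ultimately show ?thesis using n card_Diff_subset[of B ?U] by simp
  qed
  have xU: "x \<in> ?U" using x A by auto
  then have "x \<in> ?U - B" using x by simp
  then have "card ((?U - B) - {x}) = n - 1" using cUB by simp
  then have "card ((?U - B) - {x}) \<ge> 1" using n by simp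
  then have "(?U - B) - {x} \<noteq> {}" by (metis card.empty not_one_le_zero)
  then obtain y where "y \<in> (?U - B) - {x}" by blast
  then have y: "y \<in> ?U - B" "y \<noteq> x" by auto
  define C where "C = (?U - B) - {y}"
  have xC: "x \<in> C" using x y xU by (auto simp: C_def)
  have cC: "card C = n - 1" using cUB y by (simp add: C_def)
  have "C \<subseteq> ?U" "C \<inter> B = {}" unfolding C_def by auto
  then have "C \<in> nbhd (odd_graph n) B"
    using cC by (auto simp: nbhd_def odd_graph_def gverts_def gadj_def)
  moreover have "C \<notin> nbhd (odd_graph n) A"
    using xC x by (auto simp: nbhd_def odd_graph_def gverts_def gadj_def)
  ultimately show False using eq by simp
qed

theorem theorem3p4:
  fixes n :: nat
  assumes "n \<ge> 2"
  shows "inc_iso (DCD n) (V_construction (odd_graph n))"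
proof -
  let ?U = "{1..2*n-1::nat}"
  have cU: "card ?U = 2*n-1" by simp
  let ?P = "{P. P \<subseteq> ?U \<and> card P = n}"
  let ?L = "{A. A \<subseteq> ?U \<and> card A = n - 1}"
  have c1: "card (?U - P) = n - 1" if "P \<in> ?P" for P
  proof -
    have "P \<subseteq> ?U" "card P = n" using that by auto
    moreover have "finite P" using \<open>P \<subseteq> ?U\<close> finite_subset by blast
    ultimately show ?thesis using cU card_Diff_subset[of P ?U] by simp
  qed
  have c2: "card (?U - A) = n" if "A \<in> ?L" for A
  proof -
    have "A \<subseteq> ?U" "card A = n - 1" using that by auto
    moreover have "finite A" using \<open>A \<subseteq> ?U\<close> finite_subset by blast
    ultimately show ?thesis using assms card_Diff_subset[of A ?U] by simp
  qed
  have bf: "bij_betw (\<lambda>P. ?U - P) ?P ?L"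
    apply (rule bij_betw_byWitness[where f' = "\<lambda>P. ?U - P"])
    using c1 c2 by auto
  have bg: "bij_betw (nbhd (odd_graph n)) ?L (nbhd (odd_graph n) ` ?L)"
    using nbhd_inj[OF assms] by (simp add: inj_on_imp_bij_betw)
  have rel: "L \<subseteq> P \<longleftrightarrow> (?U - P) \<in> nbhd (odd_graph n) L"
    if P: "P \<in> ?P" and L: "L \<in> ?L" for P L
  proof -
    have "?U - P \<in> ?L" using c1[OF P] by auto
    then have "(?U - P) \<in> nbhd (odd_graph n) L \<longleftrightarrow> L \<inter> (?U - P) = {}"
      by (simp add: nbhd_def odd_graph_def gverts_def gadj_def)
    also have "\<dots> \<longleftrightarrow> L \<subseteq> P" using L by blast
    finally show ?thesis by simp
  qed
  have e1: "inc_points (DCD n) = ?P" "inc_blocks (DCD n) = ?L"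
    "inc_rel (DCD n) = (\<lambda>P L. L \<subseteq> P)"
    by (simp_all add: DCD_def inc_points_def inc_blocks_def inc_rel_def)
  have e2: "inc_points (V_construction (odd_graph n)) = ?L"
    "inc_blocks (V_construction (odd_graph n)) = nbhd (odd_graph n) ` ?L"
    "inc_rel (V_construction (odd_graph n)) = (\<lambda>p b. p \<in> b)"
    by (simp_all add: V_construction_def inc_points_def inc_blocks_def inc_rel_def
        odd_graph_def gverts_def)
  show ?thesis
    unfolding inc_iso_def e1 e2
    using bf bg rel by blast
qed

end
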